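(* Let $\Phi:\mathbb{R}^N\to\mathbb{R}^M$ and $L:\mathbb{R}^P\to\mathbb{R}^N$ be linear operators, let $\|\cdot\|_A$ be a norm on $\mathbb{R}^P$ with dual norm $\|\cdot\|_A^*$, and set $R(x)=\|L^*x\|_A$. Let $y\in\mathbb{R}^M$, $\lambda>0$, and let $x^\star$ be a minimizer of $$\min_{x\in\mathbb{R}^N}\ \tfrac12\|y-\Phi x\|_2^2+\lambda R(x).$$ Assume $\|\cdot\|_A$ is decomposable at $u^\star=L^*x^\star$, with associated subspace $T$ and vector $e\in T$, and let $S=T^\perp$. If $$\langle L_T^*h,\,e\rangle<\|L_S^*h\|_A\qquad\text{for all } h\in\ker(\Phi)\setminus\{0\},$$ then $x^\star$ is the unique minimizer of this problem.
   Context: For a subspace $V\subset\mathbb{R}^P$, $P_V$ denotes the orthogonal projector onto $V$, and $L_V=LP_V$, $L_V^*=P_VL^*$, $\alpha_V=P_V\alpha$ for $\alpha\in\mathbb{R}^P$. A norm $\|\cdot\|_A$ on $\mathbb{R}^P$ is decomposable at $u\in\mathbb{R}^P$ if (i) there exist a subspace $T\subset\mathbb{R}^P$ and a vector $e\in T$ such that the subdifferential of $\|\cdot\|_A$ at $u$ is $\partial\|\cdot\|_A(u)=\{\alpha\in\mathbb{R}^P:\ \alpha_T=e,\ \|\alpha_{T^\perp}\|_A^*\le 1\}$, and (ii) for every $z\in T^\perp$, $\|z\|_A=\sup\{\langle v,z\rangle: v\in T^\perp,\ \|v\|_A^*\le 1\}$. *)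

theory Defs
  imports "HOL-Analysis.Analysis"
begin

definition is_norm :: "('a::real_inner \<Rightarrow> real) \<Rightarrow> bool" where
  "is_norm f \<longleftrightarrow> (\<forall>x. 0 \<le> f x) \<and> (\<forall>x. f x = 0 \<longleftrightarrow> x = 0)
     \<and> (\<forall>c x. f (c *\<^sub>R x) = \<bar>c\<bar> * f x) \<and> (\<forall>x y. f (x + y) \<le> f x + f y)"

definition dual_norm :: "('a::real_inner \<Rightarrow> real) \<Rightarrow> 'a \<Rightarrow> real" where
  "dual_norm f v = Sup {inner v z | z. f z \<le> 1}"

definition subdiff :: "('a::real_inner \<Rightarrow> real) \<Rightarrow> 'a \<Rightarrow> 'a set" where
  "subdiff f u = {\<alpha>. \<forall>z. f u + inner \<alpha> (z - u) \<le> f z}"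

definition proj :: "'a::euclidean_space set \<Rightarrow> 'a \<Rightarrow> 'a" where
  "proj V x = (THE p. p \<in> V \<and> (\<forall>v\<in>V. inner (x - p) v = 0))"

definition decomposable_at :: "('a::euclidean_space \<Rightarrow> real) \<Rightarrow> 'a \<Rightarrow> 'a set \<Rightarrow> 'a \<Rightarrow> bool" where
  "decomposable_at f u T e \<longleftrightarrow> subspace T \<and> e \<in> T
     \<and> subdiff f u = {\<alpha>. proj T \<alpha> = e \<and> dual_norm f (proj (orthogonal_comp T) \<alpha>) \<le> 1}
     \<and> (\<forall>z \<in> orthogonal_comp T.
          f z = Sup {inner v z | v. v \<in> orthogonal_comp T \<and> dual_norm f v \<le> 1})"

end

theory Submission
  imports Defs
begin

lemma proj_unique:
  fixes V :: "'a::euclidean_space set"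
  assumes "subspace V" "p \<in> V" "\<forall>v\<in>V. inner (x - p) v = 0"
  shows "proj V x = p"
  unfolding proj_def
proof (rule the1_equality)
  show "\<exists>!p. p \<in> V \<and> (\<forall>v\<in>V. inner (x - p) v = 0)"
  proof (rule ex1I[of _ p])
    fix q assume q: "q \<in> V \<and> (\<forall>v\<in>V. inner (x - q) v = 0)"
    have d: "q - p \<in> V" using q assms subspace_diff by blast
    have "inner (q - p) (q - p) = inner (x - p) (q - p) - inner (x - q) (q - p)"
      by (simp add: inner_diff_left inner_diff_right)
    also have "\<dots> = 0" using q assms(3) d by simp
    finally show "q = p" by simp
  qed (use assms in auto)
qed (use assms in auto)

lemma proj_exists:
  fixes V :: "'a::euclidean_space set"
  assumes "subspace V"
  shows "proj V x \<in> V \<and> (\<forall>v\<in>V. inner (x - proj V x) v = 0)"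
proof -
  obtain a b where ab: "a \<in> span V" "\<And>w. w \<in> span V \<Longrightarrow> orthogonal b w" "x = a + b"
    using orthogonal_subspace_decomp_exists by blast
  have sp: "span V = V" using assms by (simp add: span_eq_iff)
  have "proj V x = a"
    using ab sp assms by (intro proj_unique) (auto simp: orthogonal_def)
  thus ?thesis using ab sp by (auto simp: orthogonal_def)
qed

lemma proj_neg:
  fixes V :: "'a::euclidean_space set"
  assumes "subspace V"
  shows "proj V (- x) = - proj V x"
proof -
  have h: "proj V x \<in> V \<and> (\<forall>v\<in>V. inner (x - proj V x) v = 0)" using proj_exists assms by blast
  show ?thesis
  proof (rule proj_unique[OF assms])
    show "- proj V x \<in> V" using h assms subspace_neg by blast
    show "\<forall>v\<in>V. inner (- x - - proj V x) v = 0"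
    proof
      fix v assume "v \<in> V"
      then have "inner (x - proj V x) v = 0" using h by blast
      then show "inner (- x - - proj V x) v = 0"
        by (simp add: inner_diff_left)
    qed
  qed
qed

theorem theorem1:
  fixes Phi :: "real^'n \<Rightarrow> real^'m"
    and L :: "real^'p \<Rightarrow> real^'n"
    and nA :: "real^'p \<Rightarrow> real"
    and y :: "real^'m" and lam :: real and xs :: "real^'n"
    and T :: "(real^'p) set" and e :: "real^'p"
  assumes "linear Phi" and "linear L" and "is_norm nA" and "lam > 0"
    and min: "\<forall>x. (1/2) * (norm (y - Phi xs))\<^sup>2 + lam * nA (adjoint L xs)
                  \<le> (1/2) * (norm (y - Phi x))\<^sup>2 + lam * nA (adjoint L x)"
    and dec: "decomposable_at nA (adjoint L xs) T e"
    and cond: "\<forall>h. Phi h = 0 \<and> h \<noteq> 0 \<longrightarrow>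
       inner (proj T (adjoint L h)) e < nA (proj (orthogonal_comp T) (adjoint L h))"
  shows "\<forall>x. (\<forall>z. (1/2) * (norm (y - Phi x))\<^sup>2 + lam * nA (adjoint L x)
                  \<le> (1/2) * (norm (y - Phi z))\<^sup>2 + lam * nA (adjoint L z)) \<longrightarrow> x = xs"
proof (intro allI impI)
  fix x
  assume minx: "\<forall>z. (1/2) * (norm (y - Phi x))\<^sup>2 + lam * nA (adjoint L x)
                  \<le> (1/2) * (norm (y - Phi z))\<^sup>2 + lam * nA (adjoint L z)"
  define F where "F z = (1/2) * (norm (y - Phi z))\<^sup>2 + lam * nA (adjoint L z)" for z
  have Fx: "F x = F xs" using minx min unfolding F_def by (meson order_antisym)
  have lA: "linear (adjoint L)" using assms(2) by (rule adjoint_linear)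
  have nA0: "\<forall>x. 0 \<le> nA x" and nAs: "\<forall>c x. nA (c *\<^sub>R x) = \<bar>c\<bar> * nA x"
    and nAt: "\<forall>x y. nA (x + y) \<le> nA x + nA y"
    using assms(3) unfolding is_norm_def by auto
  define h where "h = x - xs"
  define m where "m = (1/2) *\<^sub>R (x + xs)"
  have Pm: "Phi m = (1/2) *\<^sub>R (Phi x + Phi xs)"
    unfolding m_def using assms(1) by (simp add: linear_scale linear_add)
  have Lm: "adjoint L m = (1/2) *\<^sub>R (adjoint L x + adjoint L xs)"
    unfolding m_def using lA by (simp add: linear_scale linear_add)
  have Rm: "nA (adjoint L m) \<le> (1/2) * (nA (adjoint L x) + nA (adjoint L xs))"
  proof -
    have "nA (adjoint L m) = (1/2) * nA (adjoint L x + adjoint L xs)" using nAs Lm by simp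
    also have "\<dots> \<le> (1/2) * (nA (adjoint L x) + nA (adjoint L xs))"
      using nAt by (intro mult_left_mono) auto
    finally show ?thesis .
  qed
  define a where "a = y - Phi x"
  define b where "b = y - Phi xs"
  have ym: "y - Phi m = (1/2) *\<^sub>R (a + b)"
  proof -
    have "y = (1/2) *\<^sub>R y + (1/2) *\<^sub>R y" by (simp flip: scaleR_add_left)
    then show ?thesis unfolding a_def b_def Pm by (simp add: scaleR_add_right scaleR_diff_right)
  qed
  have Ph: "Phi h = b - a" unfolding a_def b_def h_def using assms(1) by (simp add: linear_diff)
  have par: "(norm ((1/2) *\<^sub>R (a + b)))\<^sup>2 = ((norm a)\<^sup>2 + (norm b)\<^sup>2)/2 - (norm (b - a))\<^sup>2 / 4"
    apply (simp add: power2_norm_eq_inner inner_add_left inner_add_right inner_diff_left inner_diff_right inner_commute algebra_simps)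
    apply (simp add: field_simps)
    done
  have "F xs \<le> F m" using min unfolding F_def by blast
  also have "F m \<le> (F x + F xs)/2 - (norm (Phi h))\<^sup>2 / 8"
  proof -
    have "lam * nA (adjoint L m) \<le> lam * ((1/2) * (nA (adjoint L x) + nA (adjoint L xs)))"
      using Rm assms(4) by (intro mult_left_mono) auto
    then have B: "lam * nA (adjoint L m) \<le> lam * nA (adjoint L x) / 2 + lam * nA (adjoint L xs) / 2"
      by (simp add: algebra_simps)
    have E1: "F m = (1/2) * (((norm a)\<^sup>2 + (norm b)\<^sup>2)/2 - (norm (b - a))\<^sup>2 / 4) + lam * nA (adjoint L m)"
      unfolding F_def ym par by simp
    have E2: "F x = (1/2) * (norm a)\<^sup>2 + lam * nA (adjoint L x)" unfolding F_def a_def by simp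
    have E3: "F xs = (1/2) * (norm b)\<^sup>2 + lam * nA (adjoint L xs)" unfolding F_def b_def by simp
    show ?thesis unfolding Ph using B E1 E2 E3 by (simp add: field_simps)
  qed
  finally have "(norm (Phi h))\<^sup>2 \<le> 0" using Fx by simp
  then have Phi0: "Phi h = 0" by simp
  then have "Phi x = Phi xs" unfolding h_def using assms(1) by (simp add: linear_diff)
  then have Req: "nA (adjoint L x) = nA (adjoint L xs)" using Fx assms(4) unfolding F_def by simp
  show "x = xs"
  proof (rule ccontr)
    assume ne: "x \<noteq> xs"
    then have hne: "h \<noteq> 0" "- h \<noteq> 0" unfolding h_def by auto
    have Phin: "Phi (- h) = 0" using Phi0 assms(1) by (simp add: linear_neg)
    define w where "w = adjoint L h"
    have wx: "adjoint L x = adjoint L xs + w" unfolding w_def h_def using lA by (simp add: linear_diff)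
    have wn: "adjoint L (- h) = - w" unfolding w_def using lA by (simp add: linear_neg)
    define S where "S = orthogonal_comp T"
    have sT: "subspace T" "e \<in> T" and sd: "subdiff nA (adjoint L xs) = {\<alpha>. proj T \<alpha> = e \<and> dual_norm nA (proj S \<alpha>) \<le> 1}"
      and sup: "\<forall>z \<in> S. nA z = Sup {inner v z | v. v \<in> S \<and> dual_norm nA v \<le> 1}"
      using dec unfolding decomposable_at_def S_def by auto
    have sS: "subspace S" unfolding S_def by (rule subspace_orthogonal_comp)
    have eS: "\<And>s. s \<in> S \<Longrightarrow> inner e s = 0" "\<And>s. s \<in> S \<Longrightarrow> inner s e = 0"
      using sT unfolding S_def orthogonal_comp_def orthogonal_def by (auto simp: inner_commute)
    have TS: "\<And>t s. t \<in> T \<Longrightarrow> s \<in> S \<Longrightarrow> inner t s = 0"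
      unfolding S_def orthogonal_comp_def orthogonal_def by auto
    obtain pT where pT: "proj T w = pT" by blast
    obtain pS where pS: "proj S w = pS" by blast
    have hT: "pT \<in> T \<and> (\<forall>v\<in>T. inner (w - pT) v = 0)" using proj_exists[OF sT(1)] pT by blast
    have hS: "pS \<in> S \<and> (\<forall>v\<in>S. inner (w - pS) v = 0)" using proj_exists[OF sS] pS by blast
    have ew: "inner e w = inner pT e"
    proof -
      have "inner (w - pT) e = 0" using hT sT(2) by blast
      then have "inner w e = inner pT e" by (simp add: inner_diff_left)
      then show ?thesis by (metis inner_commute)
    qed
    have key: "inner v pS \<le> - inner pT e" if v: "v \<in> S" "dual_norm nA v \<le> 1" for v
    proof -
      have p1: "proj T (e + v) = e"
        using sT v eS TS by (intro proj_unique) (auto simp: inner_commute[of v])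
      have p2: "proj S (e + v) = v"
        using sS v eS by (intro proj_unique) auto
      have "e + v \<in> subdiff nA (adjoint L xs)" using sd p1 p2 v by simp
      then have "nA (adjoint L xs) + inner (e + v) (adjoint L x - adjoint L xs) \<le> nA (adjoint L x)"
        unfolding subdiff_def by blast
      then have "inner (e + v) w \<le> 0" using Req wx by simp
      moreover have "inner v w = inner v pS"
      proof -
        have "inner (w - pS) v = 0" using hS v by blast
        then have "inner w v = inner pS v" by (simp add: inner_diff_left)
        then show ?thesis by (metis inner_commute)
      qed
      ultimately show ?thesis using ew by (simp add: inner_add_left)
    qed
    have nz: "nA pS \<le> - inner pT e"
    proof -
      have "nA pS = Sup {inner v pS | v. v \<in> S \<and> dual_norm nA v \<le> 1}" using sup hS by blast
      also have "\<dots> \<le> - inner pT e"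
      proof (rule cSup_least)
        have "dual_norm nA 0 = 0" unfolding dual_norm_def
        proof -
          have "{inner 0 z | z. nA z \<le> (1::real)} = {0::real}"
          proof -
            have "nA 0 = 0" using assms(3) unfolding is_norm_def by auto
            then have "\<exists>z. nA z \<le> 1" by (intro exI[of _ 0]) simp
            then show ?thesis by simp
          qed
          thus "Sup {inner 0 z | z. nA z \<le> 1} = 0" by simp
        qed
        then show "{inner v pS | v. v \<in> S \<and> dual_norm nA v \<le> 1} \<noteq> {}"
          using sS subspace_0 by fastforce
      qed (use key in auto)
      finally show ?thesis .
    qed
    have "inner (proj T (adjoint L (- h))) e < nA (proj S (adjoint L (- h)))"
      using cond Phin hne unfolding S_def by blast
    then have "- inner pT e < nA (- pS)"
      unfolding wn proj_neg[OF sT(1)] proj_neg[OF sS] pT pS by simp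
    moreover have "nA (- pS) = nA pS" using nAs[rule_format, of "-1" pS] by simp
    ultimately show False using nz by simp
  qed
qed

end
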